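(* Let $G$ be a finite connected strongly regular graph that is not a complete graph $K_n$ ($n\ge2$) and that contains $C_3$ as a subgraph. Then $\mathrm{L}(G)$ is not strongly regular.
   Context: A finite simple graph on $v$ vertices is strongly regular with parameters $(v,k,\lambda,\mu)$, where $k,\lambda,\mu$ are nonnegative integers, if every vertex has degree $k$, every pair of adjacent vertices has exactly $\lambda$ common neighbours, and every pair of distinct non-adjacent vertices has exactly $\mu$ common neighbours. For a simple graph $G$, $\mathrm{L}(G)$ has vertex set $E(G)$, two vertices being adjacent iff the corresponding edges of $G$ share an endpoint. *)

theory Defs
  imports Main
begin

definition simple_graph :: "'a set \<Rightarrow> 'a set set \<Rightarrow> bool" where
  "simple_graph V E \<longleftrightarrow> finite V \<and>
     (\<forall>e\<in>E. \<exists>u v. u \<in> V \<and> v \<in> V \<and> u \<noteq> v \<and> e = {u, v})"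

definition adj :: "'a set set \<Rightarrow> 'a \<Rightarrow> 'a \<Rightarrow> bool" where
  "adj E u v \<longleftrightarrow> u \<noteq> v \<and> {u, v} \<in> E"

definition strongly_regular_with ::
  "'a set \<Rightarrow> 'a set set \<Rightarrow> nat \<Rightarrow> nat \<Rightarrow> nat \<Rightarrow> nat \<Rightarrow> bool" where
  "strongly_regular_with V E n k l m \<longleftrightarrow> simple_graph V E \<and> card V = n \<and>
     (\<forall>x\<in>V. card {y\<in>V. adj E x y} = k) \<and>
     (\<forall>x\<in>V. \<forall>y\<in>V. adj E x y \<longrightarrow> card {z\<in>V. adj E x z \<and> adj E y z} = l) \<and>
     (\<forall>x\<in>V. \<forall>y\<in>V. x \<noteq> y \<and> \<not> adj E x y \<longrightarrow> card {z\<in>V. adj E x z \<and> adj E y z} = m)"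

definition strongly_regular :: "'a set \<Rightarrow> 'a set set \<Rightarrow> bool" where
  "strongly_regular V E \<longleftrightarrow> (\<exists>n k l m. strongly_regular_with V E n k l m)"

definition connected_graph :: "'a set \<Rightarrow> 'a set set \<Rightarrow> bool" where
  "connected_graph V E \<longleftrightarrow> V \<noteq> {} \<and>
     (\<forall>u\<in>V. \<forall>v\<in>V. (\<lambda>x y. x \<in> V \<and> y \<in> V \<and> adj E x y)\<^sup>*\<^sup>* u v)"

definition complete_graph :: "'a set \<Rightarrow> 'a set set \<Rightarrow> bool" where
  "complete_graph V E \<longleftrightarrow> (\<forall>u\<in>V. \<forall>v\<in>V. u \<noteq> v \<longrightarrow> adj E u v)"

definition has_triangle :: "'a set \<Rightarrow> 'a set set \<Rightarrow> bool" where
  "has_triangle V E \<longleftrightarrow> (\<exists>a\<in>V. \<exists>b\<in>V. \<exists>c\<in>V. adj E a b \<and> adj E b c \<and> adj E a c)"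

text \<open>Line graph: vertices are the edges of G, two distinct edges adjacent iff they share an endpoint.\<close>

definition line_graph_edges :: "'a set set \<Rightarrow> 'a set set set" where
  "line_graph_edges E = {{e, f} | e f. e \<in> E \<and> f \<in> E \<and> e \<noteq> f \<and> e \<inter> f \<noteq> {}}"

end

theory Submission
  imports Defs
begin

lemma adjL: "adj (line_graph_edges E) e f \<longleftrightarrow> e \<noteq> f \<and> e \<in> E \<and> f \<in> E \<and> e \<inter> f \<noteq> {}"
  unfolding adj_def line_graph_edges_def
  by (auto simp: doubleton_eq_iff)

lemma star_card:
  assumes sg: "simple_graph V E" and u: "u \<in> V" and k: "card {y\<in>V. adj E u y} = k"
  shows "card {e\<in>E. u \<in> e} = k"
proof -
  have "{e\<in>E. u \<in> e} = (\<lambda>y. {u,y}) ` {y\<in>V. adj E u y}"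
  proof
    show "{e\<in>E. u \<in> e} \<subseteq> (\<lambda>y. {u,y}) ` {y\<in>V. adj E u y}"
    proof
      fix e assume e: "e \<in> {e\<in>E. u \<in> e}"
      then obtain a b where ab: "a \<in> V" "b \<in> V" "a \<noteq> b" "e = {a,b}"
        using sg unfolding simple_graph_def by blast
      show "e \<in> (\<lambda>y. {u,y}) ` {y\<in>V. adj E u y}"
      proof (cases "u = a")
        case True
        then show ?thesis using ab e by (auto simp: adj_def intro!: image_eqI[where x=b])
      next
        case False
        then have "u = b" using ab e by auto
        then show ?thesis using ab e by (auto simp: adj_def insert_commute intro!: image_eqI[where x=a])
      qed
    qed
  next
    show "(\<lambda>y. {u,y}) ` {y\<in>V. adj E u y} \<subseteq> {e\<in>E. u \<in> e}"
      by (auto simp: adj_def)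
  qed
  moreover have "inj_on (\<lambda>y. {u,y}) {y\<in>V. adj E u y}"
    by (auto simp: inj_on_def doubleton_eq_iff adj_def)
  ultimately show ?thesis using k by (simp add: card_image)
qed

lemma common_card:
  assumes sg: "simple_graph V E" and u: "u \<in> V" and k: "card {y\<in>V. adj E u y} = k"
    and uv: "adj E u v" and uw: "adj E u w" and vw: "v \<noteq> w"
  shows "card {z\<in>E. adj (line_graph_edges E) {u,v} z \<and> adj (line_graph_edges E) {u,w} z}
         = (if adj E v w then k - 1 else k - 2)"
proof -
  let ?S = "{e\<in>E. u \<in> e}"
  have fin: "finite E"
  proof -
    have "E \<subseteq> Pow V" using sg unfolding simple_graph_def by fastforce
    moreover have "finite V" using sg unfolding simple_graph_def by blast
    ultimately show ?thesis by (meson finite_Pow_iff rev_finite_subset)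
  qed
  have cS: "card ?S = k" using star_card[OF sg u k] .
  have uvw: "u \<noteq> v" "u \<noteq> w" "{u,v} \<in> E" "{u,w} \<in> E" using uv uw by (auto simp: adj_def)
  have neq: "{u,v} \<noteq> {u,w}" using vw uvw by (auto simp: doubleton_eq_iff)
  have eq: "{z\<in>E. adj (line_graph_edges E) {u,v} z \<and> adj (line_graph_edges E) {u,w} z}
      = (?S - {{u,v},{u,w}}) \<union> (if adj E v w then {{v,w}} else {})"
  proof (intro equalityI subsetI)
    fix z assume "z \<in> {z\<in>E. adj (line_graph_edges E) {u,v} z \<and> adj (line_graph_edges E) {u,w} z}"
    then have z: "z \<in> E" "z \<noteq> {u,v}" "z \<noteq> {u,w}" "z \<inter> {u,v} \<noteq> {}" "z \<inter> {u,w} \<noteq> {}"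
      unfolding adjL by blast+
    obtain a b where ab: "a \<noteq> b" "z = {a,b}"
      using sg z(1) unfolding simple_graph_def by blast
    show "z \<in> (?S - {{u,v},{u,w}}) \<union> (if adj E v w then {{v,w}} else {})"
    proof (cases "u \<in> z")
      case True then show ?thesis using z by auto
    next
      case False
      then have "v \<in> z" "w \<in> z" using z by auto
      then have "z = {v,w}" using ab vw by auto
      then have "adj E v w" using z vw by (simp add: adj_def)
      then show ?thesis using \<open>z = {v,w}\<close> by simp
    qed
  next
    fix z assume "z \<in> (?S - {{u,v},{u,w}}) \<union> (if adj E v w then {{v,w}} else {})"
    then show "z \<in> {z\<in>E. adj (line_graph_edges E) {u,v} z \<and> adj (line_graph_edges E) {u,w} z}"
    proof (cases "z \<in> ?S - {{u,v},{u,w}}")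
      case True
      then have "z \<in> E" "u \<in> z" "z \<noteq> {u,v}" "z \<noteq> {u,w}" by auto
      moreover have "u \<in> {u,v} \<inter> z" "u \<in> {u,w} \<inter> z" using \<open>u \<in> z\<close> by auto
      ultimately show ?thesis using uvw unfolding adjL by blast
    next
      case False
      then have "adj E v w" "z = {v,w}" using \<open>z \<in> _\<close> by (auto split: if_splits)
      moreover have "v \<in> {u,v} \<inter> {v,w}" "w \<in> {u,w} \<inter> {v,w}" by auto
      moreover have "{u,v} \<noteq> {v,w}" "{u,w} \<noteq> {v,w}" using uvw vw by (auto simp: doubleton_eq_iff)
      moreover have "{v,w} \<in> E" using \<open>adj E v w\<close> by (simp add: adj_def)
      ultimately show ?thesis using uvw unfolding adjL by blast
    qed
  qed
  have fS: "finite ?S" using fin by simp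
  have sub: "{{u,v},{u,w}} \<subseteq> ?S" using uvw by auto
  have c2: "card (?S - {{u,v},{u,w}}) = k - 2"
    using card_Diff_subset[OF _ sub] fS cS neq by simp
  have notin: "{v,w} \<notin> ?S - {{u,v},{u,w}}" using uvw by auto
  show ?thesis
  proof (cases "adj E v w")
    case True
    have k2: "k \<ge> 2" using card_mono[OF fS sub] neq cS by simp
    have "card ((?S - {{u,v},{u,w}}) \<union> {{v,w}}) = k - 2 + 1"
      using notin c2 fS by simp
    then show ?thesis using eq True k2 by simp
  next
    case False
    then show ?thesis using eq c2 by simp
  qed
qed

lemma clique_nbhd_complete:
  assumes conn: "connected_graph V E"
    and cl: "\<And>u v w. u \<in> V \<Longrightarrow> v \<in> V \<Longrightarrow> w \<in> V \<Longrightarrow> adj E u v \<Longrightarrow> adj E u w \<Longrightarrow> v \<noteq> w \<Longrightarrow> adj E v w"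
  shows "complete_graph V E"
  unfolding complete_graph_def
proof (intro ballI impI)
  fix a b assume a: "a \<in> V" and b: "b \<in> V" and ab: "a \<noteq> b"
  have r: "(\<lambda>x y. x \<in> V \<and> y \<in> V \<and> adj E x y)\<^sup>*\<^sup>* a b" using conn a b unfolding connected_graph_def by blast
  have "b = a \<or> adj E a b" using r
  proof (induction rule: rtranclp_induct)
    case base then show ?case by simp
  next
    case (step y z)
    have yz: "y \<in> V" "z \<in> V" "adj E y z" using step by auto
    show ?case
    proof (cases "y = a")
      case True then show ?thesis using yz by simp
    next
      case False
      then have ay: "adj E a y" using step by simp
      show ?thesis
      proof (cases "z = a")
        case True then show ?thesis by simp
      next
        case False
        have "adj E y a" using ay by (auto simp: adj_def insert_commute)
        then show ?thesis using cl[OF yz(1) a yz(2)] yz False by (auto simp: adj_def insert_commute)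
      qed
    qed
  qed
  then show "adj E a b" using ab by simp
qed

theorem mainTheorem7:
  fixes V :: "'a set" and E :: "'a set set"
  assumes "strongly_regular V E"
    and "connected_graph V E"
    and "\<not> (complete_graph V E \<and> card V \<ge> 2)"
    and "has_triangle V E"
  shows "\<not> strongly_regular E (line_graph_edges E)"
proof
  assume L: "strongly_regular E (line_graph_edges E)"
  obtain n k l m where srg: "strongly_regular_with V E n k l m"
    using assms(1) unfolding strongly_regular_def by blast
  have sg: "simple_graph V E" and deg: "\<And>x. x \<in> V \<Longrightarrow> card {y\<in>V. adj E x y} = k"
    using srg unfolding strongly_regular_with_def by auto
  obtain nL kL lL mL where srgL: "strongly_regular_with E (line_graph_edges E) nL kL lL mL"
    using L unfolding strongly_regular_def by blast
  have lamL: "\<And>x y. x \<in> E \<Longrightarrow> y \<in> E \<Longrightarrow> adj (line_graph_edges E) x y \<Longrightarrow>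
      card {z\<in>E. adj (line_graph_edges E) x z \<and> adj (line_graph_edges E) y z} = lL"
    using srgL unfolding strongly_regular_with_def by blast
  obtain a b c where abc: "a \<in> V" "b \<in> V" "c \<in> V" "adj E a b" "adj E b c" "adj E a c"
    using assms(4) unfolding has_triangle_def by blast
  have "card V \<ge> 2"
  proof -
    have "a \<noteq> b" using abc by (simp add: adj_def)
    moreover have "finite V" using sg unfolding simple_graph_def by blast
    ultimately have "card {a,b} \<le> card V" using abc by (intro card_mono) auto
    then show ?thesis using \<open>a \<noteq> b\<close> by simp
  qed
  then have "\<not> complete_graph V E" using assms(3) by simp
  then obtain u v w where uvw: "u \<in> V" "v \<in> V" "w \<in> V" "adj E u v" "adj E u w" "v \<noteq> w" "\<not> adj E v w"
    using clique_nbhd_complete[OF assms(2)] by blast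
  have bc: "b \<noteq> c" using abc by (simp add: adj_def)
  have c1: "card {z\<in>E. adj (line_graph_edges E) {a,b} z \<and> adj (line_graph_edges E) {a,c} z} = k - 1"
    using common_card[OF sg abc(1) deg[OF abc(1)] abc(4) abc(6) bc] abc(5) by simp
  have c2: "card {z\<in>E. adj (line_graph_edges E) {u,v} z \<and> adj (line_graph_edges E) {u,w} z} = k - 2"
    using common_card[OF sg uvw(1) deg[OF uvw(1)] uvw(4) uvw(5) uvw(6)] uvw(7) by simp
  have e1: "{a,b} \<in> E" "{a,c} \<in> E" "{a,b} \<noteq> {a,c}" using abc bc by (auto simp: adj_def doubleton_eq_iff)
  have e2: "{u,v} \<in> E" "{u,w} \<in> E" "{u,v} \<noteq> {u,w}" using uvw by (auto simp: adj_def doubleton_eq_iff)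
  have l1: "k - 1 = lL" using lamL[OF e1(1,2)] c1 e1 by (simp add: adjL)
  have l2: "k - 2 = lL" using lamL[OF e2(1,2)] c2 e2 by (simp add: adjL)
  have "k \<ge> 2"
  proof -
    have "finite V" using sg unfolding simple_graph_def by blast
    then have "card {b,c} \<le> card {y\<in>V. adj E a y}" using abc by (intro card_mono) auto
    then show ?thesis using deg[OF abc(1)] bc by simp
  qed
  then show False using l1 l2 by simp
qed

end
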